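(* Let $g\colon[0,\infty)\to\mathbb{R}$ be strictly monotone with $0<c_1\le g(\lambda)<1/2$ for all $\lambda\ge0$ and $|g(\lambda)-g(\lambda')|\le c_2|\lambda-\lambda'|$ for all $\lambda,\lambda'\ge0$, for some constants $c_1>0$ and $c_2<1/2$. Let $f(\lambda,y)=g(\lambda)+y/2$. Then $f$ satisfies $|f(\lambda,y)-f(\lambda',y')|\le\kappa_1|\lambda-\lambda'|+\kappa_2|y-y'|$ with $\kappa_1=c_2$, $\kappa_2=1/2$, $\kappa_1+\kappa_2<1$, and for the strictly stationary process $((N_t,\lambda_t))_{t\in\mathbb{Z}}$ with $N_t\mid\sigma(\lambda_s,N_s:s\le t-1)\sim\mathrm{Poisson}(\lambda_t)$ and $\lambda_t=f(\lambda_{t-1},N_{t-1})$, one has $2g(\lambda_{t-1})=2\lambda_t-\lfloor2\lambda_t\rfloor$ for all $t$, so $\lambda_{t-1}$ (and hence the whole past $(\lambda_s)_{s\le t}$) is a measurable function of $\lambda_t$; in particular the intensity process $(\lambda_t)_{t\in\mathbb{Z}}$ (and hence also $((N_t,\lambda_t))_{t\in\mathbb{Z}}$) is not strongly mixing.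
   Context: Strong mixing of a stationary process $(X_t)_{t\in\mathbb Z}$ means $\alpha(n)=\sup_{A\in\sigma(X_s:s\le0),B\in\sigma(X_s:s\ge n)}|P(A\cap B)-P(A)P(B)|\to0$. $\lfloor x\rfloor$ denotes the integer part. *)

theory Defs
  imports "HOL-Probability.Probability"
begin

definition fmap :: "(real \<Rightarrow> real) \<Rightarrow> real \<Rightarrow> real \<Rightarrow> real" where
  "fmap g l y = g l + y / 2"

definition past_sigma :: "'a measure \<Rightarrow> 'b measure \<Rightarrow> (int \<Rightarrow> 'a \<Rightarrow> 'b) \<Rightarrow> int \<Rightarrow> 'a set set" where
  "past_sigma M S X n = sigma_sets (space M) {X s -` B \<inter> space M | s B. s \<le> n \<and> B \<in> sets S}"

definition future_sigma :: "'a measure \<Rightarrow> 'b measure \<Rightarrow> (int \<Rightarrow> 'a \<Rightarrow> 'b) \<Rightarrow> int \<Rightarrow> 'a set set" where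
  "future_sigma M S X n = sigma_sets (space M) {X s -` B \<inter> space M | s B. s \<ge> n \<and> B \<in> sets S}"

definition alpha_mixing :: "'a measure \<Rightarrow> 'b measure \<Rightarrow> (int \<Rightarrow> 'a \<Rightarrow> 'b) \<Rightarrow> nat \<Rightarrow> real" where
  "alpha_mixing M S X n =
     (SUP AB \<in> past_sigma M S X 0 \<times> future_sigma M S X (int n).
        \<bar>measure M (fst AB \<inter> snd AB) - measure M (fst AB) * measure M (snd AB)\<bar>)"

definition strongly_mixing :: "'a measure \<Rightarrow> 'b measure \<Rightarrow> (int \<Rightarrow> 'a \<Rightarrow> 'b) \<Rightarrow> bool" where
  "strongly_mixing M S X \<longleftrightarrow> alpha_mixing M S X \<longlonglongrightarrow> 0"

definition strictly_stationary :: "'a measure \<Rightarrow> 'b measure \<Rightarrow> (int \<Rightarrow> 'a \<Rightarrow> 'b) \<Rightarrow> bool" where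
  "strictly_stationary M S X \<longleftrightarrow>
     (\<forall>k::int. distr M (PiM UNIV (\<lambda>_. S)) (\<lambda>\<omega> t. X (t + k) \<omega>) =
               distr M (PiM UNIV (\<lambda>_. S)) (\<lambda>\<omega> t. X t \<omega>))"

end

theory Submission imports Defs begin

lemma inv_meas:
  fixes G :: "real \<Rightarrow> real"
  assumes sm: "strict_mono_on {0..} G"
  shows "\<exists>h \<in> borel_measurable borel. \<forall>l\<ge>0. h (G l) = l"
proof -
  define \<psi> where "\<psi> n z = Sup (insert 0 {l. 0\<le>l \<and> l\<le>real n \<and> G l \<le> z})" for n :: nat and z
  have bdd: "bdd_above (insert 0 {l. 0\<le>l \<and> l\<le>real n \<and> G l \<le> z})" for n z
    by (rule bdd_aboveI[of _ "real n"]) auto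
  have mono: "mono (\<psi> n)" for n
    unfolding mono_def \<psi>_def
    by (intro allI impI cSup_subset_mono bdd) auto
  have meas: "\<psi> n \<in> borel_measurable borel" for n
    using mono by (rule borel_measurable_mono)
  define h where "h z = lim (\<lambda>n. \<psi> n z)" for z
  have hm: "h \<in> borel_measurable borel" unfolding h_def using meas by measurable
  have "h (G l) = l" if l: "l \<ge> 0" for l
  proof -
    have eq: "\<psi> n (G l) = l" if n: "l \<le> real n" for n
    proof -
      have "insert 0 {x. 0\<le>x \<and> x\<le>real n \<and> G x \<le> G l} = {0..l}"
      proof (intro equalityI subsetI)
        fix x assume "x \<in> insert 0 {x. 0\<le>x \<and> x\<le>real n \<and> G x \<le> G l}"
        then show "x \<in> {0..l}"
        proof
          assume "x = 0" then show ?thesis using l by auto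
        next
          assume x: "x \<in> {x. 0\<le>x \<and> x\<le>real n \<and> G x \<le> G l}"
          show ?thesis
          proof (rule ccontr)
            assume "x \<notin> {0..l}"
            then have "l < x" using x by auto
            then have "G l < G x" using sm l x by (intro strict_mono_onD[OF sm]) auto
            then show False using x by auto
          qed
        qed
      next
        fix x assume x: "x \<in> {0..l}"
        have "G x \<le> G l"
        proof (cases "x = l")
          case False
          then have "x < l" using x by auto
          then show ?thesis using sm x l by (intro less_imp_le strict_mono_onD[OF sm]) auto
        qed simp
        then show "x \<in> insert 0 {x. 0\<le>x \<and> x\<le>real n \<and> G x \<le> G l}" using x n by auto
      qed
      then show ?thesis unfolding \<psi>_def using l by simp
    qed
    obtain n0 :: nat where "l \<le> real n0" using real_arch_simple by blast
    then have "\<forall>n\<ge>n0. \<psi> n (G l) = l" using eq by (meson order.trans of_nat_le_iff)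
    then have "(\<lambda>n. \<psi> n (G l)) \<longlonglongrightarrow> l"
      by (intro tendsto_eventually) (auto simp: eventually_sequentially)
    then show ?thesis unfolding h_def by (rule limI)
  qed
  then show ?thesis using hm by blast
qed

lemma not_mixing:
  assumes P: "prob_space M" and A: "\<And>n. A \<in> past_sigma M S X 0 \<and> A \<in> future_sigma M S X (int n)"
    and p0: "0 < measure M A" and p1: "measure M A < 1"
  shows "\<not> strongly_mixing M S X"
proof
  assume "strongly_mixing M S X"
  then have lim: "alpha_mixing M S X \<longlonglongrightarrow> 0" unfolding strongly_mixing_def .
  let ?p = "measure M A"
  let ?f = "\<lambda>AB. \<bar>measure M (fst AB \<inter> snd AB) - measure M (fst AB) * measure M (snd AB)\<bar>"
  have b: "?f AB \<le> 2" for AB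
  proof -
    have "?f AB \<le> \<bar>measure M (fst AB \<inter> snd AB)\<bar> + \<bar>measure M (fst AB)\<bar> * \<bar>measure M (snd AB)\<bar>"
      by (metis abs_mult abs_triangle_ineq4)
    also have "\<dots> \<le> 1 + 1 * 1"
      using prob_space.prob_le_1[OF P] by (intro add_mono mult_mono) auto
    finally show ?thesis by simp
  qed
  have "?p - ?p * ?p \<le> alpha_mixing M S X n" for n
  proof -
    have "?f (A, A) \<le> alpha_mixing M S X n"
      unfolding alpha_mixing_def
      by (rule cSUP_upper) (use A[of n] in \<open>auto intro!: bdd_aboveI2[where M=2] b\<close>)
    moreover have "?f (A, A) = ?p - ?p * ?p" using p0 p1
      by (simp add: abs_if)
    ultimately show ?thesis by simp
  qed
  then have "?p - ?p * ?p \<le> 0" by (intro LIMSEQ_le_const[OF lim]) auto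
  moreover have "0 < ?p * (1 - ?p)" using p0 p1 by simp
  ultimately show False by (simp add: algebra_simps)
qed
theorem mainTheorem9:
  fixes g :: "real \<Rightarrow> real" and c1 c2 :: real
    and M :: "'a measure" and N :: "int \<Rightarrow> 'a \<Rightarrow> nat" and lam :: "int \<Rightarrow> 'a \<Rightarrow> real"
  assumes g_mono: "strict_mono_on {0..} g \<or> (\<forall>x y. 0 \<le> x \<longrightarrow> x < y \<longrightarrow> g y < g x)"
    and c1: "0 < c1" and c2: "c2 < 1/2"
    and g_bounds: "\<And>l. 0 \<le> l \<Longrightarrow> c1 \<le> g l \<and> g l < 1/2"
    and g_lip: "\<And>l l'. 0 \<le> l \<Longrightarrow> 0 \<le> l' \<Longrightarrow> \<bar>g l - g l'\<bar> \<le> c2 * \<bar>l - l'\<bar>"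
    and P: "prob_space M"
    and N_meas: "\<And>t. N t \<in> M \<rightarrow>\<^sub>M count_space UNIV"
    and lam_meas: "\<And>t. lam t \<in> borel_measurable M"
    and lam_nonneg: "\<And>t \<omega>. \<omega> \<in> space M \<Longrightarrow> 0 \<le> lam t \<omega>"
    and stat: "strictly_stationary M (count_space UNIV \<Otimes>\<^sub>M borel) (\<lambda>t \<omega>. (N t \<omega>, lam t \<omega>))"
    and poisson: "\<And>t k A. A \<in> sigma_sets (space M)
            ({N s -` B \<inter> space M | s B. s \<le> t - 1} \<union>
             {lam s -` B \<inter> space M | s B. s \<le> t - 1 \<and> B \<in> sets borel}) \<Longrightarrow>
          measure M ({\<omega> \<in> space M. N t \<omega> = k} \<inter> A) =
          (\<integral>\<omega>. indicator A \<omega> * (lam t \<omega> ^ k / fact k * exp (- lam t \<omega>)) \<partial>M)"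
    and recur: "\<And>t \<omega>. \<omega> \<in> space M \<Longrightarrow> lam t \<omega> = fmap g (lam (t - 1) \<omega>) (real (N (t - 1) \<omega>))"
  shows "(\<forall>l l' y y'. 0 \<le> l \<longrightarrow> 0 \<le> l' \<longrightarrow>
            \<bar>fmap g l y - fmap g l' y'\<bar> \<le> c2 * \<bar>l - l'\<bar> + 1/2 * \<bar>y - y'\<bar>)
       \<and> c2 + 1/2 < 1
       \<and> (\<forall>t. \<forall>\<omega>\<in>space M. 2 * g (lam (t - 1) \<omega>) = 2 * lam t \<omega> - of_int \<lfloor>2 * lam t \<omega>\<rfloor>)
       \<and> (\<forall>t. \<exists>h \<in> borel_measurable borel. \<forall>\<omega>\<in>space M. lam (t - 1) \<omega> = h (lam t \<omega>))
       \<and> (\<forall>t s. s \<le> t \<longrightarrow> (\<exists>h \<in> borel_measurable borel. \<forall>\<omega>\<in>space M. lam s \<omega> = h (lam t \<omega>)))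
       \<and> \<not> strongly_mixing M borel lam
       \<and> \<not> strongly_mixing M (count_space UNIV \<Otimes>\<^sub>M borel) (\<lambda>t \<omega>. (N t \<omega>, lam t \<omega>))"
proof -
  have gb: "0 < g l \<and> g l < 1/2" if "0 \<le> l" for l using g_bounds[OF that] c1 by auto
  have p1: "\<forall>l l' y y'. 0 \<le> l \<longrightarrow> 0 \<le> l' \<longrightarrow>
            \<bar>fmap g l y - fmap g l' y'\<bar> \<le> c2 * \<bar>l - l'\<bar> + 1/2 * \<bar>y - y'\<bar>"
  proof (intro allI impI)
    fix l l' y y' :: real assume "0 \<le> l" "0 \<le> l'"
    then have "\<bar>g l - g l'\<bar> \<le> c2 * \<bar>l - l'\<bar>" by (rule g_lip)
    then show "\<bar>fmap g l y - fmap g l' y'\<bar> \<le> c2 * \<bar>l - l'\<bar> + 1/2 * \<bar>y - y'\<bar>"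
      unfolding fmap_def
    proof -
      have e: "g l + y / 2 - (g l' + y' / 2) = (g l - g l') + (y - y')/2" by (simp add: field_simps)
      have "\<bar>g l + y / 2 - (g l' + y' / 2)\<bar> \<le> \<bar>g l - g l'\<bar> + \<bar>y - y'\<bar>/2"
        using abs_triangle_ineq[of "g l - g l'" "(y - y')/2"] unfolding e by (simp add: abs_divide)
      then show "\<bar>g l + y / 2 - (g l' + y' / 2)\<bar> \<le> c2 * \<bar>l - l'\<bar> + 1/2 * \<bar>y - y'\<bar>"
        using \<open>\<bar>g l - g l'\<bar> \<le> c2 * \<bar>l - l'\<bar>\<close> by simp
    qed
  qed
  have fl: "\<lfloor>2 * lam t \<omega>\<rfloor> = int (N (t - 1) \<omega>)" and
       fr: "2 * g (lam (t - 1) \<omega>) = 2 * lam t \<omega> - of_int \<lfloor>2 * lam t \<omega>\<rfloor>"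
    if w: "\<omega> \<in> space M" for t \<omega>
  proof -
    have e: "2 * lam t \<omega> = 2 * g (lam (t - 1) \<omega>) + real (N (t - 1) \<omega>)"
      using recur[OF w, of t] by (simp add: fmap_def)
    have "0 < g (lam (t - 1) \<omega>)" "g (lam (t - 1) \<omega>) < 1/2" using gb lam_nonneg[OF w] by auto
    then show "\<lfloor>2 * lam t \<omega>\<rfloor> = int (N (t - 1) \<omega>)" unfolding e by (simp add: floor_eq_iff)
    then show "2 * g (lam (t - 1) \<omega>) = 2 * lam t \<omega> - of_int \<lfloor>2 * lam t \<omega>\<rfloor>" using e by simp
  qed
  obtain gi where gim: "gi \<in> borel_measurable borel" and gi: "\<And>l. 0 \<le> l \<Longrightarrow> gi (g l) = l"
  proof -
    show ?thesis
    proof (cases "strict_mono_on {0..} g")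
      case True
      then show ?thesis using inv_meas[OF True] that by blast
    next
      case False
      then have dec: "\<forall>x y. 0 \<le> x \<longrightarrow> x < y \<longrightarrow> g y < g x" using g_mono by blast
      have "strict_mono_on {0..} (\<lambda>x. - g x)"
        by (rule strict_mono_onI) (use dec in auto)
      from inv_meas[OF this] obtain h where "h \<in> borel_measurable borel" "\<forall>l\<ge>0. h (- g l) = l"
        by blast
      then show ?thesis by (intro that[of "\<lambda>y. h (- y)"]) auto
    qed
  qed
  have p4: "\<forall>t. \<exists>h \<in> borel_measurable borel. \<forall>\<omega>\<in>space M. lam (t - 1) \<omega> = h (lam t \<omega>)"
  proof
    fix t
    let ?h = "\<lambda>x. gi ((2 * x - of_int \<lfloor>2 * x\<rfloor>) / 2)"
    have "?h \<in> borel_measurable borel" using gim borel_measurable_real_floor by measurable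
    moreover have "\<forall>\<omega>\<in>space M. lam (t - 1) \<omega> = ?h (lam t \<omega>)"
    proof
      fix \<omega> assume w: "\<omega> \<in> space M"
      have "(2 * lam t \<omega> - of_int \<lfloor>2 * lam t \<omega>\<rfloor>) / 2 = g (lam (t - 1) \<omega>)"
        using fr[OF w, of t] by simp
      then show "lam (t - 1) \<omega> = ?h (lam t \<omega>)" using gi lam_nonneg[OF w] by simp
    qed
    ultimately show "\<exists>h \<in> borel_measurable borel. \<forall>\<omega>\<in>space M. lam (t - 1) \<omega> = h (lam t \<omega>)"
      by (intro bexI[of _ ?h])
  qed
  have it: "\<exists>h \<in> borel_measurable borel. \<forall>\<omega>\<in>space M. lam (t - int k) \<omega> = h (lam t \<omega>)" for k t
  proof (induction k)
    case 0
    show ?case by (intro bexI[of _ "\<lambda>x. x"]) auto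
  next
    case (Suc k)
    then obtain h where h: "h \<in> borel_measurable borel" "\<forall>\<omega>\<in>space M. lam (t - int k) \<omega> = h (lam t \<omega>)"
      by blast
    obtain h1 where h1: "h1 \<in> borel_measurable borel"
      "\<forall>\<omega>\<in>space M. lam (t - int k - 1) \<omega> = h1 (lam (t - int k) \<omega>)"
      using p4 by blast
    have "(\<lambda>x. h1 (h x)) \<in> borel_measurable borel" using h h1 by measurable
    moreover have "\<forall>\<omega>\<in>space M. lam (t - int (Suc k)) \<omega> = h1 (h (lam t \<omega>))"
      using h h1 by (simp add: algebra_simps)
    ultimately show ?case by (intro bexI[of _ "\<lambda>x. h1 (h x)"])
  qed
  have p5: "\<forall>t s. s \<le> t \<longrightarrow> (\<exists>h \<in> borel_measurable borel. \<forall>\<omega>\<in>space M. lam s \<omega> = h (lam t \<omega>))"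
  proof (intro allI impI)
    fix t s :: int assume "s \<le> t"
    then have "s = t - int (nat (t - s))" by simp
    then show "\<exists>h \<in> borel_measurable borel. \<forall>\<omega>\<in>space M. lam s \<omega> = h (lam t \<omega>)"
      using it[of t "nat (t - s)"] by metis
  qed
  define A where "A = lam 0 -` {..<1/2} \<inter> space M"
  have A_alt: "A = {\<omega> \<in> space M. N (-1) \<omega> = 0} \<inter> space M"
  proof -
    have "lam 0 \<omega> < 1/2 \<longleftrightarrow> N (-1) \<omega> = 0" if w: "\<omega> \<in> space M" for \<omega>
    proof -
      have "lam 0 \<omega> < 1/2 \<longleftrightarrow> \<lfloor>2 * lam 0 \<omega>\<rfloor> < 1" by (simp add: floor_less_iff) linarith
      then show ?thesis using fl[OF w, of 0] by simp
    qed
    then show ?thesis unfolding A_def by auto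
  qed
  have lb: "c1 \<le> lam t \<omega>" if w: "\<omega> \<in> space M" for t \<omega>
    using recur[OF w, of t] g_bounds[OF lam_nonneg[OF w, of "t - 1"]] by (simp add: fmap_def)
  interpret prob_space M by (rule P)
  have "{N s -` B \<inter> space M | s B. s \<le> -1 - 1} \<union>
             {lam s -` B \<inter> space M | s B. s \<le> -1 - 1 \<and> B \<in> sets borel} \<subseteq> Pow (space M)"
    by auto
  have pA: "measure M A = (\<integral>\<omega>. exp (- lam (-1) \<omega>) \<partial>M)"
  proof -
    have "measure M A = (\<integral>\<omega>. indicator (space M) \<omega> * (lam (-1) \<omega> ^ 0 / fact 0 * exp (- lam (-1) \<omega>)) \<partial>M)"
      unfolding A_alt using poisson[of "space M" "-1" 0] by (simp add: sigma_sets_top)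
    also have "\<dots> = (\<integral>\<omega>. exp (- lam (-1) \<omega>) \<partial>M)"
      by (intro Bochner_Integration.integral_cong) auto
    finally show ?thesis .
  qed
  have meas1: "(\<lambda>\<omega>. exp (- lam (-1) \<omega>)) \<in> borel_measurable M" using lam_meas by measurable
  have int1: "integrable M (\<lambda>\<omega>. exp (- lam (-1) \<omega>))"
    by (rule integrable_const_bound[where B=1]) (use lam_nonneg meas1 in auto)
  have "(\<integral>\<omega>. exp (- lam (-1) \<omega>) \<partial>M) \<le> (\<integral>\<omega>. exp (- c1) \<partial>M)"
    by (intro integral_mono_AE int1) (use lb in auto)
  also have "\<dots> = exp (- c1)" by (simp add: prob_space)
  also have "\<dots> < 1" using c1 by simp
  finally have pA1: "measure M A < 1" using pA by simp
  have "(\<integral>\<omega>. exp (- lam (-1) \<omega>) \<partial>M) \<noteq> 0"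
  proof
    assume "(\<integral>\<omega>. exp (- lam (-1) \<omega>) \<partial>M) = 0"
    then have "AE \<omega> in M. exp (- lam (-1) \<omega>) = 0"
      using integral_nonneg_eq_0_iff_AE[OF int1] by auto
    then have "AE \<omega> in M. False" by simp
    then show False by (simp add: AE_False)
  qed
  moreover have "0 \<le> (\<integral>\<omega>. exp (- lam (-1) \<omega>) \<partial>M)" by (intro integral_nonneg_AE) simp
  ultimately have pA0: "0 < measure M A" using pA by linarith
  obtain H where H: "\<And>n. H n \<in> borel_measurable borel"
    "\<And>n. \<forall>\<omega>\<in>space M. lam 0 \<omega> = H n (lam (int n) \<omega>)"
  proof -
    have "\<forall>n::nat. \<exists>h. h \<in> borel_measurable borel \<and> (\<forall>\<omega>\<in>space M. lam 0 \<omega> = h (lam (int n) \<omega>))"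
    proof
      fix n :: nat
      have "(0::int) \<le> int n" by simp
      then obtain h where "h \<in> borel_measurable borel" "\<forall>\<omega>\<in>space M. lam 0 \<omega> = h (lam (int n) \<omega>)"
        using p5 by meson
      then show "\<exists>h. h \<in> borel_measurable borel \<and> (\<forall>\<omega>\<in>space M. lam 0 \<omega> = h (lam (int n) \<omega>))" by blast
    qed
    from choice[OF this] obtain H where "\<forall>n. H n \<in> borel_measurable borel \<and> (\<forall>\<omega>\<in>space M. lam 0 \<omega> = H n (lam (int n) \<omega>))"
      by blast
    then show ?thesis using that by blast
  qed
  have Hset: "H n -` {..<1/2} \<in> sets borel" for n
    using measurable_sets[OF H(1)[of n], of "{..<1/2}"] by simp
  have A_fut: "A = lam (int n) -` (H n -` {..<1/2}) \<inter> space M" for n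
    unfolding A_def using H(2)[of n] by auto
  have p6: "\<not> strongly_mixing M borel lam"
  proof (rule not_mixing[OF P _ pA0 pA1])
    fix n
    show "A \<in> past_sigma M borel lam 0 \<and> A \<in> future_sigma M borel lam (int n)"
      unfolding past_sigma_def future_sigma_def
      apply (intro conjI sigma_sets.Basic CollectI)
       apply (rule exI[of _ 0], rule exI[of _ "{..<1/2}"]) apply (simp add: A_def)
      apply (rule exI[of _ "int n"], rule exI[of _ "H n -` {..<1/2}"])
      using Hset[of n] A_fut[of n] by simp
  qed
  have p7: "\<not> strongly_mixing M (count_space UNIV \<Otimes>\<^sub>M borel) (\<lambda>t \<omega>. (N t \<omega>, lam t \<omega>))"
  proof (rule not_mixing[OF P _ pA0 pA1])
    fix n
    have s1: "UNIV \<times> {..<1/2::real} \<in> sets (count_space UNIV \<Otimes>\<^sub>M borel)"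
      by (rule pair_measureI) auto
    have s2: "UNIV \<times> (H n -` {..<1/2}) \<in> sets (count_space UNIV \<Otimes>\<^sub>M borel)"
      by (rule pair_measureI) (use Hset in auto)
    have e1: "A = (\<lambda>\<omega>. (N 0 \<omega>, lam 0 \<omega>)) -` (UNIV \<times> {..<1/2}) \<inter> space M"
      unfolding A_def by auto
    have e2: "A = (\<lambda>\<omega>. (N (int n) \<omega>, lam (int n) \<omega>)) -` (UNIV \<times> (H n -` {..<1/2})) \<inter> space M"
      unfolding A_fut[of n] by auto
    show "A \<in> past_sigma M (count_space UNIV \<Otimes>\<^sub>M borel) (\<lambda>t \<omega>. (N t \<omega>, lam t \<omega>)) 0 \<and>
          A \<in> future_sigma M (count_space UNIV \<Otimes>\<^sub>M borel) (\<lambda>t \<omega>. (N t \<omega>, lam t \<omega>)) (int n)"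
      unfolding past_sigma_def future_sigma_def
      apply (intro conjI sigma_sets.Basic CollectI)
       apply (rule exI[of _ 0], rule exI[of _ "UNIV \<times> {..<1/2}"]) using e1 s1 apply simp
      apply (rule exI[of _ "int n"], rule exI[of _ "UNIV \<times> (H n -` {..<1/2})"])
      using e2 s2 by simp
  qed
  have p3: "\<forall>t. \<forall>\<omega>\<in>space M. 2 * g (lam (t - 1) \<omega>) = 2 * lam t \<omega> - of_int \<lfloor>2 * lam t \<omega>\<rfloor>"
    using fr by blast
  have p2: "c2 + 1/2 < 1" using c2 by simp
  show ?thesis by (intro conjI p1 p2 p3 p4 p5 p6 p7)
qed

end
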